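(* For any graph $G$ of order $n$, $\gamma_{qtR}(G)\le n-\rho(G)(\delta(G)-2)$.
   Context: All graphs are finite, simple and undirected; $\delta(G)$ is the minimum degree. A set $B\subseteq V(G)$ is a packing if $N[u]\cap N[v]=\emptyset$ for all distinct $u,v\in B$; the packing number $\rho(G)$ is the maximum size of a packing. For $f:V(G)\to\{0,1,2\}$ write $V_i=\{v:f(v)=i\}$; weight $\omega(f)=|V_1|+2|V_2|$. A quasi-total Roman dominating function (QTRDF) is an $f$ such that every vertex labeled $0$ is adjacent to a vertex labeled $2$, and every vertex isolated in the subgraph induced by $V_1\cup V_2$ has label $1$; $\gamma_{qtR}(G)$ is the minimum weight of a QTRDF. *)

theory Defs
  imports Main
begin

definition graph :: "'a set \<Rightarrow> ('a \<Rightarrow> 'a \<Rightarrow> bool) \<Rightarrow> bool" where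
  "graph V E \<longleftrightarrow> finite V \<and> (\<forall>u v. E u v \<longrightarrow> u \<in> V \<and> v \<in> V)
     \<and> (\<forall>u v. E u v \<longrightarrow> E v u) \<and> (\<forall>v. \<not> E v v)"

definition open_nbhd :: "'a set \<Rightarrow> ('a \<Rightarrow> 'a \<Rightarrow> bool) \<Rightarrow> 'a \<Rightarrow> 'a set" where
  "open_nbhd V E v = {u \<in> V. E v u}"

definition closed_nbhd :: "'a set \<Rightarrow> ('a \<Rightarrow> 'a \<Rightarrow> bool) \<Rightarrow> 'a \<Rightarrow> 'a set" where
  "closed_nbhd V E v = insert v (open_nbhd V E v)"

definition degree :: "'a set \<Rightarrow> ('a \<Rightarrow> 'a \<Rightarrow> bool) \<Rightarrow> 'a \<Rightarrow> nat" where
  "degree V E v = card (open_nbhd V E v)"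

definition min_degree :: "'a set \<Rightarrow> ('a \<Rightarrow> 'a \<Rightarrow> bool) \<Rightarrow> nat" where
  "min_degree V E = Min (degree V E ` V)"

definition packing :: "'a set \<Rightarrow> ('a \<Rightarrow> 'a \<Rightarrow> bool) \<Rightarrow> 'a set \<Rightarrow> bool" where
  "packing V E B \<longleftrightarrow> B \<subseteq> V \<and>
     (\<forall>u\<in>B. \<forall>v\<in>B. u \<noteq> v \<longrightarrow> closed_nbhd V E u \<inter> closed_nbhd V E v = {})"

definition packing_number :: "'a set \<Rightarrow> ('a \<Rightarrow> 'a \<Rightarrow> bool) \<Rightarrow> nat" where
  "packing_number V E = Max {card B | B. packing V E B}"

definition qtrdf :: "'a set \<Rightarrow> ('a \<Rightarrow> 'a \<Rightarrow> bool) \<Rightarrow> ('a \<Rightarrow> nat) \<Rightarrow> bool" where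
  "qtrdf V E f \<longleftrightarrow>
     (\<forall>v\<in>V. f v \<le> 2)
   \<and> (\<forall>v\<in>V. f v = 0 \<longrightarrow> (\<exists>u\<in>V. E v u \<and> f u = 2))
   \<and> (\<forall>v\<in>V. f v \<noteq> 0 \<and> (\<forall>u\<in>V. E v u \<longrightarrow> f u = 0) \<longrightarrow> f v = 1)"

definition weight :: "'a set \<Rightarrow> ('a \<Rightarrow> nat) \<Rightarrow> nat" where
  "weight V f = (\<Sum>v\<in>V. f v)"

definition gamma_qtR :: "'a set \<Rightarrow> ('a \<Rightarrow> 'a \<Rightarrow> bool) \<Rightarrow> nat" where
  "gamma_qtR V E = Min {weight V f | f. qtrdf V E f}"

end

theory Submission
  imports Defs
begin

lemma gamma_le:
  assumes g: "graph V E" and q: "qtrdf V E f"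
  shows "gamma_qtR V E \<le> weight V f"
proof -
  have fin: "finite V" using g by (simp add: graph_def)
  have "{weight V f | f. qtrdf V E f} \<subseteq> {..2 * card V}"
  proof
    fix x assume "x \<in> {weight V f | f. qtrdf V E f}"
    then obtain h where x: "x = weight V h" and h: "qtrdf V E h" by blast
    have "weight V h \<le> (\<Sum>v\<in>V. 2)" unfolding weight_def
      using h by (intro sum_mono) (simp add: qtrdf_def)
    thus "x \<in> {..2 * card V}" using x by simp
  qed
  hence "finite {weight V f | f. qtrdf V E f}" using finite_subset by blast
  thus ?thesis unfolding gamma_qtR_def using q by (intro Min_le) auto
qed

lemma packing_max:
  assumes g: "graph V E"
  shows "\<exists>B. packing V E B \<and> card B = packing_number V E"
proof -
  have fin: "finite V" using g by (simp add: graph_def)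
  have "{card B | B. packing V E B} \<subseteq> card ` Pow V" unfolding packing_def by auto
  hence f: "finite {card B | B. packing V E B}" using fin finite_subset by blast
  have "packing V E {}" by (simp add: packing_def)
  hence ne: "{card B | B. packing V E B} \<noteq> {}" by blast
  have "packing_number V E \<in> {card B | B. packing V E B}"
    unfolding packing_number_def using Max_in[OF f ne] .
  thus ?thesis by auto
qed

theorem mainTheorem8:
  fixes V :: "'a set" and E :: "'a \<Rightarrow> 'a \<Rightarrow> bool" and n :: nat
  assumes "graph V E" and "V \<noteq> {}" and "card V = n"
  shows "int (gamma_qtR V E)
           \<le> int n - int (packing_number V E) * (int (min_degree V E) - 2)"
proof -
  have g: "graph V E" by fact
  have fin: "finite V" using g by (simp add: graph_def)
  have inV: "\<And>u v. E u v \<Longrightarrow> u \<in> V \<and> v \<in> V" using g by (simp add: graph_def)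
  have sym: "\<And>u v. E u v \<Longrightarrow> E v u" using g by (simp add: graph_def)
  have irr: "\<And>v. \<not> E v v" using g by (simp add: graph_def)
  obtain B where pB: "packing V E B" and cB: "card B = packing_number V E"
    using packing_max[OF g] by blast
  have BV: "B \<subseteq> V" using pB by (simp add: packing_def)
  have finB: "finite B" using BV fin finite_subset by blast
  have disj: "\<And>u v. u \<in> B \<Longrightarrow> v \<in> B \<Longrightarrow> u \<noteq> v \<Longrightarrow> closed_nbhd V E u \<inter> closed_nbhd V E v = {}"
    using pB by (simp add: packing_def)
  have mindeg: "\<And>v. v \<in> V \<Longrightarrow> min_degree V E \<le> degree V E v"
    unfolding min_degree_def using fin by (intro Min_le) auto
  show ?thesis
  proof (cases "min_degree V E \<le> 2")
    case True
    have q: "qtrdf V E (\<lambda>_. 1)" by (simp add: qtrdf_def)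
    have "gamma_qtR V E \<le> n" using gamma_le[OF g q] assms(3) by (simp add: weight_def)
    moreover have "int (packing_number V E) * (int (min_degree V E) - 2) \<le> 0"
      using True by (simp add: mult_nonneg_nonpos)
    ultimately show ?thesis by linarith
  next
    case False
    have degB: "\<And>v. v \<in> B \<Longrightarrow> degree V E v \<ge> 3" using False mindeg BV by force
    have ex: "\<And>v. v \<in> B \<Longrightarrow> \<exists>u. E v u"
    proof -
      fix v assume "v \<in> B"
      hence "card (open_nbhd V E v) \<ge> 3" using degB by (simp add: degree_def)
      hence "open_nbhd V E v \<noteq> {}" by auto
      thus "\<exists>u. E v u" by (auto simp: open_nbhd_def)
    qed
    define w where "w = (\<lambda>v. SOME u. E v u)"
    have Ew: "\<And>v. v \<in> B \<Longrightarrow> E v (w v)" unfolding w_def using ex by (metis someI_ex)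
    have nb: "\<And>u v x. u \<in> B \<Longrightarrow> v \<in> B \<Longrightarrow> x \<in> closed_nbhd V E u \<Longrightarrow> x \<in> closed_nbhd V E v \<Longrightarrow> u = v"
      using disj by blast
    have cn: "\<And>v x. E v x \<Longrightarrow> x \<in> closed_nbhd V E v"
      using inV by (simp add: closed_nbhd_def open_nbhd_def)
    have cn0: "\<And>v. v \<in> V \<Longrightarrow> v \<in> closed_nbhd V E v" by (simp add: closed_nbhd_def)
    define f where "f = (\<lambda>x. if x \<in> B then 2 else if x \<in> w ` B then 1
                         else if (\<exists>v\<in>B. E v x) then 0 else (1::nat))"
    have wnB: "\<And>v. v \<in> B \<Longrightarrow> w v \<notin> B"
    proof
      fix v assume v: "v \<in> B" and "w v \<in> B"
      moreover have "w v \<in> closed_nbhd V E v" using cn Ew v by blast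
      moreover have "w v \<in> closed_nbhd V E (w v)" using cn0 inV Ew v by blast
      ultimately have "v = w v" using nb by blast
      thus False using Ew v irr by metis
    qed
    have q: "qtrdf V E f"
      unfolding qtrdf_def
    proof (intro conjI ballI impI)
      fix v assume "v \<in> V" show "f v \<le> 2" by (simp add: f_def)
    next
      fix x assume x: "x \<in> V" "f x = 0"
      then obtain v where v: "v \<in> B" "E v x" by (auto simp: f_def split: if_splits)
      show "\<exists>u\<in>V. E x u \<and> f u = 2" using v sym inV by (intro bexI[of _ v]) (auto simp: f_def)
    next
      fix x assume x: "x \<in> V" "f x \<noteq> 0 \<and> (\<forall>u\<in>V. E x u \<longrightarrow> f u = 0)"
      show "f x = 1"
      proof (cases "x \<in> B")
        case True
        hence "f (w x) = 1" using wnB by (auto simp: f_def)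
        thus ?thesis using x Ew True inV by force
      next
        case False
        thus ?thesis using x by (auto simp: f_def split: if_splits)
      qed
    qed
    define C where "C = (\<Union>v\<in>B. closed_nbhd V E v)"
    have CV: "C \<subseteq> V" using BV inV by (auto simp: C_def closed_nbhd_def open_nbhd_def)
    have finC: "finite C" using CV fin finite_subset by blast
    have fincn: "\<And>v. finite (closed_nbhd V E v)"
      using fin by (simp add: closed_nbhd_def open_nbhd_def)
    have cardcn: "\<And>v. v \<in> B \<Longrightarrow> card (closed_nbhd V E v) = degree V E v + 1"
    proof -
      fix v assume "v \<in> B"
      have "v \<notin> open_nbhd V E v" using irr by (simp add: open_nbhd_def)
      moreover have "finite (open_nbhd V E v)" using fin by (simp add: open_nbhd_def)
      ultimately show "card (closed_nbhd V E v) = degree V E v + 1"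
        by (simp add: closed_nbhd_def degree_def)
    qed
    have cardC: "card C = (\<Sum>v\<in>B. degree V E v + 1)"
      unfolding C_def using finB fincn disj
      by (subst card_UN_disjoint) (auto simp: cardcn)
    have sumcn: "\<And>v. v \<in> B \<Longrightarrow> sum f (closed_nbhd V E v) = 3"
    proof -
      fix v assume v: "v \<in> B"
      have vV: "v \<in> V" using v BV by blast
      have wv: "w v \<in> open_nbhd V E v" using Ew[OF v] inV by (simp add: open_nbhd_def)
      have vn: "v \<notin> open_nbhd V E v" using irr by (simp add: open_nbhd_def)
      have fo: "finite (open_nbhd V E v)" using fin by (simp add: open_nbhd_def)
      have z: "\<And>x. x \<in> open_nbhd V E v - {w v} \<Longrightarrow> f x = 0"
      proof -
        fix x assume x: "x \<in> open_nbhd V E v - {w v}"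
        hence Evx: "E v x" by (simp add: open_nbhd_def)
        have "x \<notin> B"
        proof
          assume "x \<in> B"
          moreover have "x \<in> closed_nbhd V E x" using cn0 inV Evx by blast
          ultimately have "x = v" using nb v cn Evx by blast
          thus False using Evx irr by metis
        qed
        moreover have "x \<notin> w ` B"
        proof
          assume "x \<in> w ` B"
          then obtain u where u: "u \<in> B" "x = w u" by blast
          hence "x \<in> closed_nbhd V E u" using cn Ew by blast
          hence "u = v" using nb u(1) v cn Evx by blast
          thus False using x u by simp
        qed
        ultimately show "f x = 0" using Evx v by (auto simp: f_def)
      qed
      have fw: "f (w v) = 1" using wnB v by (auto simp: f_def)
      have "sum f (closed_nbhd V E v) = f v + sum f (open_nbhd V E v)"
        using vn fo by (simp add: closed_nbhd_def)
      also have "sum f (open_nbhd V E v) = f (w v) + sum f (open_nbhd V E v - {w v})"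
        using wv fo by (simp add: sum.remove)
      also have "sum f (open_nbhd V E v - {w v}) = 0" using z by simp
      finally show "sum f (closed_nbhd V E v) = 3" using fw v by (simp add: f_def)
    qed
    have sumC: "sum f C = 3 * card B"
      unfolding C_def using finB fincn disj
      by (subst sum.UNION_disjoint) (auto simp: sumcn)
    have "weight V f = sum f C + sum f (V - C)"
      unfolding weight_def using fin CV by (metis sum.subset_diff add.commute)
    also have "sum f (V - C) \<le> (\<Sum>x\<in>V - C. 1)"
      using cn0 BV by (intro sum_mono) (auto simp: f_def C_def)
    finally have wt: "weight V f \<le> 3 * card B + (n - card C)"
      using sumC fin CV assms(3) by (simp add: card_Diff_subset finC)
    have cCn: "card C \<le> n" using CV fin assms(3) card_mono by blast
    have "int (card C) = (\<Sum>v\<in>B. int (degree V E v) + 1)" using cardC by (simp add: add.commute)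
    also have "\<dots> \<ge> (\<Sum>v\<in>B. int (min_degree V E) + 1)"
      using mindeg BV by (intro sum_mono) force
    finally have "int (card C) \<ge> int (card B) * (int (min_degree V E) + 1)" by simp
    hence "int (weight V f) \<le> int n - int (card B) * (int (min_degree V E) - 2)"
      using wt cCn by (simp add: algebra_simps of_nat_diff)
    moreover have "int (gamma_qtR V E) \<le> int (weight V f)" using gamma_le[OF g q] by simp
    ultimately show ?thesis using cB by simp
  qed
qed

end
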